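(* In any execution of \textsf{Murmur} (described in the context) in which the correct gossip network is connected, \textsf{Murmur} satisfies totality: if some correct process delivers a message, then every correct process eventually delivers a message.
   Context: System model: a fixed set $\Pi$ of processes, some Byzantine and the rest correct ($\Pi_C$ denotes the correct ones), communicating asynchronously over reliable authenticated point-to-point links (every message between correct processes is eventually delivered); signatures cannot be forged; a designated sender $\sigma$ with a public key. \textsf{Murmur} (parameter $G$): upon initialization each correct process samples $\bar G$ from a Poisson distribution with mean $G$, chooses $\bar G$ distinct processes uniformly at random as its gossip sample, and sends GossipSubscribe to each. Upon receiving GossipSubscribe from $\pi$, a correct process adds $\pi$ to its gossip sample and, if it has already set its variable $delivered$ to some (message, signature) pair, sends $\pi$ a Gossip message with that pair. Procedure dispatch(message, signature): if $delivered=\bot$, set $delivered$ to the pair, send a Gossip message with the pair to every process in the gossip sample, and deliver the message. The sender broadcasts $m$ by calling dispatch$(m,\mathrm{sign}_\sigma(m))$; upon receiving a Gossip message whose signature verifies against $\sigma$'s key, a correct process calls dispatch on it. The correct gossip network is the undirected graph with vertex set $\Pi_C$ in which correct $\pi,\rho$ are adjacent iff $\rho$ is eventually in $\pi$'s gossip sample (this relation is symmetric). *)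

theory Defs
  imports Main
begin

text \<open>Abstract operational model of the Murmur protocol (parameter G only
affects the random size of the initial gossip sample; totality must hold for
every outcome of the random choices, so the initial sample is an arbitrary
finite subset of the process set).\<close>

datatype ('m, 's) content = Subscribe | Gossip 'm 's

text \<open>A network message: (sender, receiver, content).  Links are authenticated,
so the sender field of a message is the true sender.\<close>
type_synonym ('p, 'm, 's) netmsg = "'p \<times> 'p \<times> ('m, 's) content"

record ('p, 'm, 's) config =
  smp   :: "'p \<Rightarrow> 'p set"
  deliv :: "'p \<Rightarrow> ('m \<times> 's) option"
  sent  :: "('p, 'm, 's) netmsg set"
  rcvd  :: "('p, 'm, 's) netmsg set"

text \<open>Procedure dispatch at process p with (message, signature) pair d.
Delivery of the message happens exactly when delivered is set.\<close>
definition dispatch :: "'p \<Rightarrow> 'm \<times> 's \<Rightarrow> ('p, 'm, 's) config \<Rightarrow> ('p, 'm, 's) config" where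
  "dispatch p d c =
    (if deliv c p = None
     then c\<lparr>deliv := (deliv c)(p := Some d),
            sent := sent c \<union> {(p, r, Gossip (fst d) (snd d)) | r. r \<in> smp c p}\<rparr>
     else c)"

definition init_config ::
  "'p set \<Rightarrow> 'p set \<Rightarrow> ('p, 'm, 's) config \<Rightarrow> bool" where
  "init_config Pi C c \<longleftrightarrow>
     (\<forall>p\<in>C. finite (smp c p) \<and> smp c p \<subseteq> Pi \<and> deliv c p = None) \<and>
     sent c = {(p, r, Subscribe) | p r. p \<in> C \<and> r \<in> smp c p} \<and>
     rcvd c = {}"

text \<open>One step of an execution.  verify m s: s verifies against the sender's
public key; sign m: the sender's signature on m.\<close>
definition murmur_step ::
  "'p set \<Rightarrow> 'p set \<Rightarrow> 'p \<Rightarrow> ('m \<Rightarrow> 's \<Rightarrow> bool) \<Rightarrow> ('m \<Rightarrow> 's)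
   \<Rightarrow> ('p, 'm, 's) config \<Rightarrow> ('p, 'm, 's) config \<Rightarrow> bool" where
  "murmur_step Pi C sndr verify sign c c' \<longleftrightarrow>
     \<comment> \<open>no event\<close>
     c' = c
     \<comment> \<open>correct sender broadcasts m\<close>
   \<or> (\<exists>m. sndr \<in> C \<and> c' = dispatch sndr (m, sign m) c)
     \<comment> \<open>correct p receives GossipSubscribe from r\<close>
   \<or> (\<exists>p r. p \<in> C \<and> (r, p, Subscribe) \<in> sent c \<and> (r, p, Subscribe) \<notin> rcvd c \<and>
        (let c1 = c\<lparr>rcvd := insert (r, p, Subscribe) (rcvd c),
                    smp := (smp c)(p := insert r (smp c p))\<rparr>
         in c' = (case deliv c p of
                    None \<Rightarrow> c1
                  | Some (m, s) \<Rightarrow> c1\<lparr>sent := insert (p, r, Gossip m s) (sent c1)\<rparr>)))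
     \<comment> \<open>correct p receives Gossip (m, s) from r\<close>
   \<or> (\<exists>p r m s. p \<in> C \<and> (r, p, Gossip m s) \<in> sent c \<and> (r, p, Gossip m s) \<notin> rcvd c \<and>
        (let c1 = c\<lparr>rcvd := insert (r, p, Gossip m s) (rcvd c)\<rparr>
         in c' = (if verify m s then dispatch p (m, s) c1 else c1)))
     \<comment> \<open>a Byzantine process sends an arbitrary message; it cannot forge the
         signature of a correct sender\<close>
   \<or> (\<exists>b r x. b \<in> Pi - C \<and> r \<in> Pi \<and>
        (case x of
           Subscribe \<Rightarrow> True
         | Gossip m s \<Rightarrow> (verify m s \<and> sndr \<in> C \<longrightarrow> (\<exists>a a'. (a, a', Gossip m s) \<in> sent c))) \<and>
        c' = c\<lparr>sent := insert (b, r, x) (sent c)\<rparr>)"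

definition reliable ::
  "'p set \<Rightarrow> (nat \<Rightarrow> ('p, 'm, 's) config) \<Rightarrow> bool" where
  "reliable C ex \<longleftrightarrow>
     (\<forall>p r x t. p \<in> C \<and> r \<in> C \<and> (p, r, x) \<in> sent (ex t) \<longrightarrow> (\<exists>t'. (p, r, x) \<in> rcvd (ex t')))"

definition murmur_execution ::
  "'p set \<Rightarrow> 'p set \<Rightarrow> 'p \<Rightarrow> ('m \<Rightarrow> 's \<Rightarrow> bool) \<Rightarrow> ('m \<Rightarrow> 's)
   \<Rightarrow> (nat \<Rightarrow> ('p, 'm, 's) config) \<Rightarrow> bool" where
  "murmur_execution Pi C sndr verify sign ex \<longleftrightarrow>
     init_config Pi C (ex 0) \<and>
     (\<forall>t. murmur_step Pi C sndr verify sign (ex t) (ex (Suc t))) \<and>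
     reliable C ex"

definition gossip_adj :: "'p set \<Rightarrow> (nat \<Rightarrow> ('p, 'm, 's) config) \<Rightarrow> 'p \<Rightarrow> 'p \<Rightarrow> bool" where
  "gossip_adj C ex p r \<longleftrightarrow> p \<in> C \<and> r \<in> C \<and>
     ((\<exists>t. r \<in> smp (ex t) p) \<or> (\<exists>t. p \<in> smp (ex t) r))"

definition gossip_connected :: "'p set \<Rightarrow> (nat \<Rightarrow> ('p, 'm, 's) config) \<Rightarrow> bool" where
  "gossip_connected C ex \<longleftrightarrow> (\<forall>p\<in>C. \<forall>r\<in>C. (gossip_adj C ex)\<^sup>*\<^sup>* p r)"

definition delivers :: "(nat \<Rightarrow> ('p, 'm, 's) config) \<Rightarrow> 'p \<Rightarrow> bool" where
  "delivers ex p \<longleftrightarrow> (\<exists>t. deliv (ex t) p \<noteq> None)"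

end

theory Submission
  imports Defs
begin

lemma disp_smp[simp]: "smp (dispatch p d c) = smp c" by (simp add: dispatch_def)
lemma disp_rcvd[simp]: "rcvd (dispatch p d c) = rcvd c" by (simp add: dispatch_def)
lemma disp_deliv[simp]: "deliv (dispatch p d c) = (if deliv c p = None then (deliv c)(p := Some d) else deliv c)"
  by (simp add: dispatch_def)
lemma disp_sent[simp]: "sent (dispatch p d c) = (if deliv c p = None then sent c \<union> {(p, r, Gossip (fst d) (snd d)) | r. r \<in> smp c p} else sent c)"
  by (simp add: dispatch_def)

lemmas step_unf = murmur_step_def Let_def

lemma step_cases:
  assumes "murmur_step Pi C sndr verify sign c c'"
  obtains (nop) "c' = c"
  | (bc) m where "sndr \<in> C" "c' = dispatch sndr (m, sign m) c"
  | (sub0) p r where "p \<in> C" "(r, p, Subscribe) \<in> sent c" "(r, p, Subscribe) \<notin> rcvd c" "deliv c p = None"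
      "c' = c\<lparr>rcvd := insert (r, p, Subscribe) (rcvd c), smp := (smp c)(p := insert r (smp c p))\<rparr>"
  | (sub1) p r m s where "p \<in> C" "(r, p, Subscribe) \<in> sent c" "(r, p, Subscribe) \<notin> rcvd c" "deliv c p = Some (m, s)"
      "c' = c\<lparr>rcvd := insert (r, p, Subscribe) (rcvd c), smp := (smp c)(p := insert r (smp c p)),
              sent := insert (p, r, Gossip m s) (sent c)\<rparr>"
  | (gos1) p r m s where "p \<in> C" "(r, p, Gossip m s) \<in> sent c" "(r, p, Gossip m s) \<notin> rcvd c" "verify m s"
      "c' = dispatch p (m, s) (c\<lparr>rcvd := insert (r, p, Gossip m s) (rcvd c)\<rparr>)"
  | (gos0) p r m s where "p \<in> C" "(r, p, Gossip m s) \<in> sent c" "(r, p, Gossip m s) \<notin> rcvd c" "\<not> verify m s"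
      "c' = c\<lparr>rcvd := insert (r, p, Gossip m s) (rcvd c)\<rparr>"
  | (byz) b r x where "b \<in> Pi - C" "r \<in> Pi"
      "c' = c\<lparr>sent := insert (b, r, x) (sent c)\<rparr>"
  using assms unfolding step_unf
  apply (elim disjE exE conjE)
  subgoal by (rule nop)
  subgoal for m by (rule bc[of m])
  subgoal for p r
    apply (cases "deliv c p")
     apply (rule sub0[of p r]; simp)
    apply (rename_tac d, case_tac d)
    apply (rule sub1[of p r]; simp)
    done
  subgoal for p r m s
    apply (cases "verify m s")
     apply (rule gos1[of p r m s]; simp)
    apply (rule gos0[of p r m s]; simp)
    done
  subgoal for b r x by (rule byz[of b r x]; simp)
  done

lemma st_deliv: "murmur_step Pi C sndr verify sign c c' \<Longrightarrow> deliv c p = Some d \<Longrightarrow> deliv c' p = Some d"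
  by (erule step_cases) auto


lemma st_smp: "murmur_step Pi C sndr verify sign c c' \<Longrightarrow> q \<in> smp c p \<Longrightarrow> q \<in> smp c' p"
  by (erule step_cases) auto


lemma st_sent: "murmur_step Pi C sndr verify sign c c' \<Longrightarrow> x \<in> sent c \<Longrightarrow> x \<in> sent c'"
  by (erule step_cases) auto


lemma st_rcvd: "murmur_step Pi C sndr verify sign c c' \<Longrightarrow> x \<in> rcvd c \<Longrightarrow> x \<in> rcvd c'"
  by (erule step_cases) auto


lemma st_rs: "murmur_step Pi C sndr verify sign c c' \<Longrightarrow> rcvd c \<subseteq> sent c \<Longrightarrow> rcvd c' \<subseteq> sent c'"
  by (erule step_cases) auto


lemma st_sub_sent: "murmur_step Pi C sndr verify sign c c' \<Longrightarrow>
   (\<forall>p r. (p, r, Subscribe) \<in> sent c \<and> p \<in> C \<longrightarrow> r \<in> smp c0 p) \<Longrightarrow>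
   (\<forall>p r. (p, r, Subscribe) \<in> sent c' \<and> p \<in> C \<longrightarrow> r \<in> smp c0 p)"
  by (erule step_cases) auto


lemma st_rcv_sub: "murmur_step Pi C sndr verify sign c c' \<Longrightarrow>
   (\<forall>p q. (q, p, Subscribe) \<in> rcvd c \<longrightarrow> q \<in> smp c p) \<Longrightarrow>
   (\<forall>p q. (q, p, Subscribe) \<in> rcvd c' \<longrightarrow> q \<in> smp c' p)"
  by (erule step_cases) auto


lemma st_smp_inv: "murmur_step Pi C sndr verify sign c c' \<Longrightarrow>
   (\<forall>p q. q \<in> smp c p \<longrightarrow> q \<in> smp c0 p \<or> (q, p, Subscribe) \<in> rcvd c) \<Longrightarrow>
   (\<forall>p q. q \<in> smp c' p \<longrightarrow> q \<in> smp c0 p \<or> (q, p, Subscribe) \<in> rcvd c')"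
  by (erule step_cases) auto


lemma st_ver: "murmur_step Pi C sndr verify sign c c' \<Longrightarrow> \<forall>m. verify m (sign m) \<Longrightarrow>
   (\<forall>p m s. p \<in> C \<and> deliv c p = Some (m, s) \<longrightarrow> verify m s) \<Longrightarrow>
   (\<forall>p m s. p \<in> C \<and> deliv c' p = Some (m, s) \<longrightarrow> verify m s)"
  by (erule step_cases) auto


lemma st_gos: "murmur_step Pi C sndr verify sign c c' \<Longrightarrow>
   (\<forall>p r m s. p \<in> C \<and> deliv c p = Some (m, s) \<and> r \<in> smp c p \<longrightarrow> (p, r, Gossip m s) \<in> sent c) \<Longrightarrow>
   (\<forall>p r m s. p \<in> C \<and> deliv c' p = Some (m, s) \<and> r \<in> smp c' p \<longrightarrow> (p, r, Gossip m s) \<in> sent c')"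
  by (erule step_cases) auto


lemma st_rg: "murmur_step Pi C sndr verify sign c c' \<Longrightarrow>
   (\<forall>q r m s. (q, r, Gossip m s) \<in> rcvd c \<and> verify m s \<longrightarrow> deliv c r \<noteq> None) \<Longrightarrow>
   (\<forall>q r m s. (q, r, Gossip m s) \<in> rcvd c' \<and> verify m s \<longrightarrow> deliv c' r \<noteq> None)"
proof (intro allI impI)
  fix q r m s
  assume S: "murmur_step Pi C sndr verify sign c c'"
    and H: "\<forall>q r m s. (q, r, Gossip m s) \<in> rcvd c \<and> verify m s \<longrightarrow> deliv c r \<noteq> None"
    and A: "(q, r, Gossip m s) \<in> rcvd c' \<and> verify m s"
  have D: "deliv c r \<noteq> None \<Longrightarrow> deliv c' r \<noteq> None"
  proof -
    assume "deliv c r \<noteq> None"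
    then obtain d where "deliv c r = Some d" by blast
    from st_deliv[OF S this] show ?thesis by simp
  qed
  have R: "(q, r, Gossip m s) \<in> rcvd c \<Longrightarrow> deliv c' r \<noteq> None"
    using H A D by blast
  from S show "deliv c' r \<noteq> None"
  proof (cases rule: step_cases)
    case nop then show ?thesis using A R by simp
  next
    case (bc m') then show ?thesis using A R by simp
  next
    case (sub0 p r') then show ?thesis using A R by simp
  next
    case (sub1 p r' m' s') then show ?thesis using A R by simp
  next
    case (gos1 p r' m' s')
    show ?thesis
    proof (cases "r = p")
      case True then show ?thesis using gos1(5) by simp
    next
      case False then show ?thesis using gos1(5) A R by simp
    qed
  next
    case (gos0 p r' m' s') then show ?thesis using A R by auto
  next
    case (byz b r' x) then show ?thesis using A R by simp
  qed
qed

lemma ex_step: "murmur_execution Pi C sndr verify sign ex \<Longrightarrow> murmur_step Pi C sndr verify sign (ex t) (ex (Suc t))"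
  unfolding murmur_execution_def by blast

lemma deliv_mono:
  assumes E: "murmur_execution Pi C sndr verify sign ex" and "deliv (ex t) p = Some d" and "t \<le> t'"
  shows "deliv (ex t') p = Some d"
proof -
  have "deliv (ex (t + k)) p = Some d" for k
    by (induction k) (auto intro: st_deliv[OF ex_step[OF E]] assms(2))
  then show ?thesis using assms(3) by (metis le_add_diff_inverse)
qed

lemma smp_mono:
  assumes E: "murmur_execution Pi C sndr verify sign ex" and "q \<in> smp (ex t) p" and "t \<le> t'"
  shows "q \<in> smp (ex t') p"
proof -
  have "q \<in> smp (ex (t + k)) p" for k
    by (induction k) (auto intro: st_smp[OF ex_step[OF E]] assms(2))
  then show ?thesis using assms(3) by (metis le_add_diff_inverse)
qed

definition Inv where
  "Inv C verify c0 c \<longleftrightarrow> rcvd c \<subseteq> sent c \<and>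
   (\<forall>p r. (p, r, Subscribe) \<in> sent c \<and> p \<in> C \<longrightarrow> r \<in> smp c0 p) \<and>
   (\<forall>p q. (q, p, Subscribe) \<in> rcvd c \<longrightarrow> q \<in> smp c p) \<and>
   (\<forall>p q. q \<in> smp c p \<longrightarrow> q \<in> smp c0 p \<or> (q, p, Subscribe) \<in> rcvd c) \<and>
   (\<forall>p m s. p \<in> C \<and> deliv c p = Some (m, s) \<longrightarrow> verify m s) \<and>
   (\<forall>p r m s. p \<in> C \<and> deliv c p = Some (m, s) \<and> r \<in> smp c p \<longrightarrow> (p, r, Gossip m s) \<in> sent c) \<and>
   (\<forall>q r m s. (q, r, Gossip m s) \<in> rcvd c \<and> verify m s \<longrightarrow> deliv c r \<noteq> None)"

lemma Inv_H1: "Inv C verify c0 c \<Longrightarrow> rcvd c \<subseteq> sent c"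
  unfolding Inv_def by (elim conjE) assumption

lemma Inv_H2: "Inv C verify c0 c \<Longrightarrow> \<forall>p r. (p, r, Subscribe) \<in> sent c \<and> p \<in> C \<longrightarrow> r \<in> smp c0 p"
  unfolding Inv_def by (elim conjE) assumption

lemma Inv_H3: "Inv C verify c0 c \<Longrightarrow> \<forall>p q. (q, p, Subscribe) \<in> rcvd c \<longrightarrow> q \<in> smp c p"
  unfolding Inv_def by (elim conjE) assumption

lemma Inv_H4: "Inv C verify c0 c \<Longrightarrow> \<forall>p q. q \<in> smp c p \<longrightarrow> q \<in> smp c0 p \<or> (q, p, Subscribe) \<in> rcvd c"
  unfolding Inv_def by (elim conjE) assumption

lemma Inv_H5: "Inv C verify c0 c \<Longrightarrow> \<forall>p m s. p \<in> C \<and> deliv c p = Some (m, s) \<longrightarrow> verify m s"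
  unfolding Inv_def by (elim conjE) assumption

lemma Inv_H6: "Inv C verify c0 c \<Longrightarrow> \<forall>p r m s. p \<in> C \<and> deliv c p = Some (m, s) \<and> r \<in> smp c p \<longrightarrow> (p, r, Gossip m s) \<in> sent c"
  unfolding Inv_def by (elim conjE) assumption

lemma Inv_H7: "Inv C verify c0 c \<Longrightarrow> \<forall>q r m s. (q, r, Gossip m s) \<in> rcvd c \<and> verify m s \<longrightarrow> deliv c r \<noteq> None"
  unfolding Inv_def by (elim conjE) assumption

lemma inv_all:
  assumes E: "murmur_execution Pi C sndr verify sign ex" and V: "\<forall>m. verify m (sign m)"
  shows "Inv C verify (ex 0) (ex t)"
proof (induction t)
  case 0
  have I: "init_config Pi C (ex 0)" using E unfolding murmur_execution_def by blast
  show ?case using I unfolding Inv_def init_config_def by auto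
next
  case (Suc t)
  note S = ex_step[OF E, of t]
  have H1: "rcvd (ex t) \<subseteq> sent (ex t)"
    by (rule Inv_H1[OF Suc.IH])
  have H2: "\<forall>p r. (p, r, Subscribe) \<in> sent (ex t) \<and> p \<in> C \<longrightarrow> r \<in> smp (ex 0) p"
    by (rule Inv_H2[OF Suc.IH])
  have H3: "\<forall>p q. (q, p, Subscribe) \<in> rcvd (ex t) \<longrightarrow> q \<in> smp (ex t) p"
    by (rule Inv_H3[OF Suc.IH])
  have H4: "\<forall>p q. q \<in> smp (ex t) p \<longrightarrow> q \<in> smp (ex 0) p \<or> (q, p, Subscribe) \<in> rcvd (ex t)"
    by (rule Inv_H4[OF Suc.IH])
  have H5: "\<forall>p m s. p \<in> C \<and> deliv (ex t) p = Some (m, s) \<longrightarrow> verify m s"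
    by (rule Inv_H5[OF Suc.IH])
  have H6: "\<forall>p r m s. p \<in> C \<and> deliv (ex t) p = Some (m, s) \<and> r \<in> smp (ex t) p \<longrightarrow> (p, r, Gossip m s) \<in> sent (ex t)"
    by (rule Inv_H6[OF Suc.IH])
  have H7: "\<forall>q r m s. (q, r, Gossip m s) \<in> rcvd (ex t) \<and> verify m s \<longrightarrow> deliv (ex t) r \<noteq> None"
    by (rule Inv_H7[OF Suc.IH])
  show ?case unfolding Inv_def
    by (intro conjI st_rs[OF S H1] st_sub_sent[OF S H2] st_rcv_sub[OF S H3] st_smp_inv[OF S H4]
      st_ver[OF S V H5] st_gos[OF S H6] st_rg[OF S H7])
qed

lemma L1:
  assumes E: "murmur_execution Pi C sndr verify sign ex" and V: "\<forall>m. verify m (sign m)"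
    and "p \<in> C" "r \<in> C" "r \<in> smp (ex t2) p" "delivers ex p"
  shows "delivers ex r"
proof -
  obtain t1 m s where d: "deliv (ex t1) p = Some (m, s)" using assms(6) unfolding delivers_def by auto
  let ?t = "max t1 t2"
  have d': "deliv (ex ?t) p = Some (m, s)" using deliv_mono[OF E d] by simp
  have r': "r \<in> smp (ex ?t) p" using smp_mono[OF E assms(5)] by simp
  have I: "Inv C verify (ex 0) (ex ?t)" by (rule inv_all[OF E V])
  have sn: "(p, r, Gossip m s) \<in> sent (ex ?t)" using Inv_H6[OF I] d' r' assms(3) by blast
  have vf: "verify m s" using Inv_H5[OF I] d' assms(3) by blast
  obtain t' where rc: "(p, r, Gossip m s) \<in> rcvd (ex t')"
    using E sn assms(3,4) unfolding murmur_execution_def reliable_def by blast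
  have "deliv (ex t') r \<noteq> None" using Inv_H7[OF inv_all[OF E V, of t']] rc vf by blast
  then show ?thesis unfolding delivers_def by blast
qed

lemma L2:
  assumes E: "murmur_execution Pi C sndr verify sign ex" and V: "\<forall>m. verify m (sign m)"
    and "p \<in> C" "r \<in> C" "p \<in> smp (ex t) r"
  shows "\<exists>t'. r \<in> smp (ex t') p"
proof -
  have I: "Inv C verify (ex 0) (ex t)" by (rule inv_all[OF E V])
  have "p \<in> smp (ex 0) r \<or> (p, r, Subscribe) \<in> rcvd (ex t)" using Inv_H4[OF I] assms(5) by blast
  then show ?thesis
  proof
    assume a: "p \<in> smp (ex 0) r"
    have "init_config Pi C (ex 0)" using E unfolding murmur_execution_def by blast
    then have "(r, p, Subscribe) \<in> sent (ex 0)" using a assms(4) unfolding init_config_def by blast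
    then obtain t' where rc: "(r, p, Subscribe) \<in> rcvd (ex t')"
      using E assms(3,4) unfolding murmur_execution_def reliable_def by blast
    then show ?thesis using Inv_H3[OF inv_all[OF E V, of t']] by blast
  next
    assume "(p, r, Subscribe) \<in> rcvd (ex t)"
    then have "(p, r, Subscribe) \<in> sent (ex t)" using Inv_H1[OF I] by blast
    then show ?thesis using Inv_H2[OF I] assms(3) by blast
  qed
qed

theorem lemma2:
  fixes Pi C :: "'p set" and sndr :: 'p
    and verify :: "'m \<Rightarrow> 's \<Rightarrow> bool" and sign :: "'m \<Rightarrow> 's"
    and ex :: "nat \<Rightarrow> ('p, 'm, 's) config"
  assumes "finite Pi" and "C \<subseteq> Pi" and "sndr \<in> Pi"
    and "\<forall>m. verify m (sign m)"
    and "murmur_execution Pi C sndr verify sign ex"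
    and "gossip_connected C ex"
  shows "(\<exists>p\<in>C. delivers ex p) \<longrightarrow> (\<forall>r\<in>C. delivers ex r)"
proof (intro impI ballI)
  fix r assume "\<exists>p\<in>C. delivers ex p" and rC: "r \<in> C"
  then obtain p where pC: "p \<in> C" and dp: "delivers ex p" by blast
  have "(gossip_adj C ex)\<^sup>*\<^sup>* p r" using assms(6) pC rC unfolding gossip_connected_def by blast
  then show "delivers ex r"
  proof (induction rule: rtranclp_induct)
    case base
    then show ?case by (rule dp)
  next
    case (step y z)
    from step.hyps(2) have yC: "y \<in> C" and zC: "z \<in> C" and
      o: "(\<exists>t. z \<in> smp (ex t) y) \<or> (\<exists>t. y \<in> smp (ex t) z)" unfolding gossip_adj_def by auto
    from o have "\<exists>t. z \<in> smp (ex t) y"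
      using L2[OF assms(5,4) yC zC] by blast
    then obtain t where "z \<in> smp (ex t) y" by blast
    then show ?case using L1[OF assms(5,4) yC zC _ step.IH] by blast
  qed
qed

end
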